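(* For any $r\in\big(1,(\log n)/(2\log(3e/2))\big]$ and $\gamma>0$, \[ \sum_{i=1}^\infty\frac{n^\gamma\log i}{(i^r+n)^\gamma}\ge\frac{1}{3\cdot2^\gamma r}\,n^{1/r}\log n. \] *)

theory Defs
  imports Complex_Main
begin

end

theory Submission
  imports Defs
begin

lemma ln_fact_lower:
  fixes m :: nat
  shows "real m * ln (real m) - real m \<le> (\<Sum>i<m. ln (real (Suc i)))"
proof (induction m)
  case 0 then show ?case by simp
next
  case (Suc m)
  show ?case
  proof (cases "m = 0")
    case True then show ?thesis by simp
  next
    case False
    hence mpos: "real m > 0" by simp
    have "ln ((real m + 1) / real m) \<le> (real m + 1) / real m - 1"
      by (rule ln_le_minus_one) (use mpos in simp)
    also have "\<dots> = 1 / real m" using mpos by (simp add: field_simps)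
    finally have h: "ln (real m + 1) - ln (real m) \<le> 1 / real m"
      using mpos by (simp add: ln_div)
    hence "real m * (ln (real m + 1) - ln (real m)) \<le> 1"
      using mpos by (simp add: field_simps)
    hence "(real m + 1) * ln (real m + 1) - (real m + 1)
        \<le> real m * ln (real m) - real m + ln (real m + 1)"
      by (simp add: algebra_simps)
    also have "\<dots> \<le> (\<Sum>i<m. ln (real (Suc i))) + ln (real (Suc m))"
      using Suc.IH by (simp add: add.commute)
    finally show ?thesis by (simp add: add.commute)
  qed
qed

theorem lemma8p3:
  fixes n :: nat and r \<gamma> :: real
  assumes "1 < r" and "r \<le> ln (real n) / (2 * ln (3 * exp 1 / 2))"
    and "\<gamma> > 0"
  shows "summable (\<lambda>i. real n powr \<gamma> * ln (real (Suc i)) / (real (Suc i) powr r + real n) powr \<gamma>)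
     \<longrightarrow> 1 / (3 * 2 powr \<gamma> * r) * real n powr (1 / r) * ln (real n)
         \<le> (\<Sum>i. real n powr \<gamma> * ln (real (Suc i)) / (real (Suc i) powr r + real n) powr \<gamma>)"
proof
  define f where "f = (\<lambda>i. real n powr \<gamma> * ln (real (Suc i)) / (real (Suc i) powr r + real n) powr \<gamma>)"
  assume sf: "summable (\<lambda>i. real n powr \<gamma> * ln (real (Suc i)) / (real (Suc i) powr r + real n) powr \<gamma>)"
  hence sum: "summable f" unfolding f_def .
  define c :: real where "c = ln (3 * exp 1 / 2)"
  have e2: "exp 1 \<ge> (2::real)" using exp_ge_add_one_self[of 1] by simp
  have c3: "c \<ge> ln 3" unfolding c_def using e2 by (subst ln_le_cancel_iff) auto
  have "ln (2/3::real) \<le> 2/3 - 1" by (rule ln_le_minus_one) simp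
  hence l32: "ln (3/2::real) \<ge> 1/3" by (simp add: ln_div)
  have "c = ln (3/2) + ln (exp 1)" unfolding c_def
  proof -
    have "3 * exp 1 / 2 = (3/2) * exp (1::real)" by simp
    moreover have "ln ((3/2) * exp (1::real)) = ln (3/2) + ln (exp 1)" by (rule ln_mult_pos) auto
    ultimately show "ln (3 * exp 1 / 2) = ln (3/2) + ln (exp (1::real))" by simp
  qed
  hence c43: "c \<ge> 4/3" using l32 by simp
  have cpos: "2 * c > 0" using c43 by simp
  have r2: "r \<le> ln (real n) / (2 * c)" using assms(2) unfolding c_def .
  have rle: "r * (2 * c) \<le> ln (real n)" using r2 cpos by (simp add: pos_le_divide_eq)
  have "r * (2 * c) > 0" using assms(1) cpos by (intro mult_pos_pos) auto
  hence lnpos: "ln (real n) > 0" using rle by linarith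
  have npos: "real n > 1"
  proof (cases "n = 0")
    case True thus ?thesis using lnpos by simp
  next
    case False thus ?thesis using lnpos ln_gt_zero_iff[of "real n"] by simp
  qed
  define x where "x = real n powr (1 / r)"
  have xpos: "x > 0" unfolding x_def using npos by simp
  define L where "L = ln x"
  have L: "L = ln (real n) / r" unfolding L_def x_def using npos by (simp add: ln_powr)
  have L2c: "L \<ge> 2 * c" unfolding L using rle assms(1) by (simp add: field_simps)
  hence L83: "L \<ge> 8/3" using c43 by simp
  have "ln x \<ge> ln 9"
  proof -
    have "ln (9::real) = 2 * ln 3" using ln_realpow[of 3 2] by simp
    thus ?thesis using L2c c3 unfolding L_def by simp
  qed
  hence x9: "x \<ge> 9" using xpos by simp
  have xr: "x powr r = real n" unfolding x_def using npos assms(1)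
    by (simp add: powr_powr)
  define m where "m = nat \<lfloor>x\<rfloor>"
  have mx: "real m \<le> x" unfolding m_def using xpos by linarith
  have xm: "x < real m + 1" unfolding m_def using xpos by linarith
  have fl: "(9::int) \<le> \<lfloor>x\<rfloor>" using x9 le_floor_iff[of 9 x] by simp
  hence "m \<ge> 9" unfolding m_def by (metis nat_mono nat_numeral)
  hence m9: "real m \<ge> 9" by simp
  have m910: "real m \<ge> 9/10 * x" using xm m9 by linarith
  have lnm: "ln (real m) \<ge> L - 1/9"
  proof -
    have "ln (real m) \<ge> ln (9/10 * x)" using m910 xpos by (subst ln_le_cancel_iff) auto
    moreover have "ln (9/10 * x) = ln (9/10) + L" unfolding L_def using xpos by (rule ln_mult_pos[rotated]) simp
    moreover have "ln (10/9::real) \<le> 10/9 - 1" by (rule ln_le_minus_one) simp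
    moreover have "ln (9/10::real) = - ln (10/9)" by (simp add: ln_div)
    ultimately show ?thesis by simp
  qed
  have key: "x * L / 3 \<le> real m * ln (real m) - real m"
  proof -
    have "real m * (L - 10/9) \<le> real m * (ln (real m) - 1)"
      using lnm m9 by (intro mult_left_mono) auto
    moreover have "9/10 * x * (L - 10/9) \<le> real m * (L - 10/9)"
      using m910 L83 by (intro mult_right_mono) auto
    moreover have "x * L / 3 \<le> 9/10 * x * (L - 10/9)"
    proof -
      have "x * (L/3) \<le> x * (9/10 * (L - 10/9))" using L83 xpos by (intro mult_left_mono) auto
      thus ?thesis by (simp add: algebra_simps)
    qed
    ultimately have "x * L / 3 \<le> real m * (ln (real m) - 1)" by linarith
    thus ?thesis by (simp add: algebra_simps)
  qed
  have g: "2 powr \<gamma> > 0" by simp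
  have terms: "ln (real (Suc i)) / 2 powr \<gamma> \<le> f i" if "i < m" for i
  proof -
    have "real (Suc i) \<le> x" using that mx by simp
    hence "real (Suc i) powr r \<le> x powr r" using assms(1) by (intro powr_mono2) auto
    hence a: "real (Suc i) powr r + real n \<le> 2 * real n" using xr by simp
    have b: "(real (Suc i) powr r + real n) powr \<gamma> \<le> (2 * real n) powr \<gamma>"
      using a assms(3) npos by (intro powr_mono2) auto
    have "real (Suc i) powr r \<ge> 0" by simp
    hence "real (Suc i) powr r + real n > 0" using npos by linarith
    hence pos: "(real (Suc i) powr r + real n) powr \<gamma> > 0" by simp
    have lnn: "ln (real (Suc i)) \<ge> 0" by simp
    have "ln (real (Suc i)) / 2 powr \<gamma> = real n powr \<gamma> * ln (real (Suc i)) / (2 * real n) powr \<gamma>"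
      using npos by (simp add: powr_mult)
    also have "\<dots> \<le> f i" unfolding f_def
      using b pos lnn npos by (intro divide_left_mono mult_nonneg_nonneg) auto
    finally show ?thesis .
  qed
  have fnn: "f i \<ge> 0" for i unfolding f_def using npos by simp
  have "(\<Sum>i<m. ln (real (Suc i))) / 2 powr \<gamma> = (\<Sum>i<m. ln (real (Suc i)) / 2 powr \<gamma>)"
    by (simp add: sum_divide_distrib)
  also have "\<dots> \<le> (\<Sum>i<m. f i)" using terms by (intro sum_mono) auto
  also have "\<dots> \<le> suminf f" using sum fnn by (intro sum_le_suminf) auto
  finally have s1: "(\<Sum>i<m. ln (real (Suc i))) / 2 powr \<gamma> \<le> suminf f" .
  have "1 / (3 * 2 powr \<gamma> * r) * real n powr (1 / r) * ln (real n) = x * L / 3 / 2 powr \<gamma>"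
    unfolding L x_def using assms(1) by (simp add: field_simps)
  also have "\<dots> \<le> (\<Sum>i<m. ln (real (Suc i))) / 2 powr \<gamma>"
    using key ln_fact_lower[of m] g by (intro divide_right_mono) auto
  finally show "1 / (3 * 2 powr \<gamma> * r) * real n powr (1 / r) * ln (real n)
         \<le> (\<Sum>i. real n powr \<gamma> * ln (real (Suc i)) / (real (Suc i) powr r + real n) powr \<gamma>)"
    using s1 unfolding f_def by simp
qed

end
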